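(* Let $M,M'$ be positive integers, $L_1\ge2$, $L_2\ge1$, and let $\Gamma_{1,1},\dots,\Gamma_{1,L_1},\Gamma_{2,1},\dots,\Gamma_{2,L_2}$ be pairwise co-prime positive integers with $\Gamma_{1,1}=\dot\Gamma_{1,1}M'$ for some integer $\dot\Gamma_{1,1}$. Consider the moduli $M_i=M\Gamma_{1,i}$ for $1\le i\le L_1$ and $M_{L_1+i}=MM'\Gamma_{2,i}$ for $1\le i\le L_2$. Let $N$ be an integer with $0\le N<\operatorname{lcm}(M_1,\dots,M_{L_1+L_2})$, let $r_i$ be the remainder of $N$ modulo $M_i$, $n_i=(N-r_i)/M_i$, and let $\tilde r_i$ be integers with $0\le\tilde r_i\le M_i-1$ and $|\tilde r_i-r_i|\le\tau_i$, where $$\tau_1<M/4,\qquad \tau_i\le M/4\ (2\le i\le L_1),\qquad \tau_i\le MM'/2-M/4\ (L_1+1\le i\le L_1+L_2).$$ Then the single-stage algorithm (described in the context) run on $M_1,\dots,M_{L_1+L_2}$ with reference index $1$ and inputs $\tilde r_i$ outputs $\hat n_i=n_i$ for all $1\le i\le L_1+L_2$.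
   Context: For $x\in\mathbb R$, $[x]$ denotes the unique integer with $-1/2\le x-[x]<1/2$. Single-stage algorithm: let $P_1,\dots,P_m$ ($m\ge2$) be pairwise distinct positive integers, $k\in\{1,\dots,m\}$ a reference index, and $x_1,\dots,x_m$ integers. For each $i\ne k$ put $m_{ki}=\gcd(P_k,P_i)$, $\Gamma_{ki}=P_k/m_{ki}$, $\Gamma_{ik}=P_i/m_{ki}$, $\hat q_{ik}=[(x_i-x_k)/m_{ki}]$; let $\bar\Gamma_{ki}$ be a multiplicative inverse of $\Gamma_{ki}$ modulo $\Gamma_{ik}$, and let $\hat\xi_{ik}\in\{0,\dots,\Gamma_{ik}-1\}$ with $\hat\xi_{ik}\equiv\hat q_{ik}\bar\Gamma_{ki}\pmod{\Gamma_{ik}}$. Let $\hat n_k$ be the least nonnegative integer $y$ with $y\equiv\hat\xi_{ik}\pmod{\Gamma_{ik}}$ for all $i\ne k$ (if no such $y$ exists the algorithm fails). For $i\ne k$ set $\hat n_i=(\hat n_k\Gamma_{ki}-\hat q_{ik})/\Gamma_{ik}$. Outputs: $\hat n_1,\dots,\hat n_m$ and the estimate $[\frac1m\sum_{i=1}^m(\hat n_iP_i+x_i)]$. *)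

theory Defs
  imports "HOL-Number_Theory.Number_Theory"
begin

definition rnd :: "real \<Rightarrow> int" where
  "rnd x = (THE k::int. - 1/2 \<le> x - real_of_int k \<and> x - real_of_int k < 1/2)"

text \<open>Single-stage algorithm on moduli P 1..P m with reference index k and inputs x 1..x m.\<close>
definition single_stage ::
  "nat \<Rightarrow> (nat \<Rightarrow> int) \<Rightarrow> nat \<Rightarrow> (nat \<Rightarrow> int) \<Rightarrow> (nat \<Rightarrow> int) option" where
  "single_stage m P k x =
    (let mm = (\<lambda>i. gcd (P k) (P i));
         Gk = (\<lambda>i. P k div mm i);
         Gi = (\<lambda>i. P i div mm i);
         q = (\<lambda>i. rnd (real_of_int (x i - x k) / real_of_int (mm i)));
         Gbar = (\<lambda>i. SOME g::int. [Gk i * g = 1] (mod Gi i));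
         xi = (\<lambda>i. (q i * Gbar i) mod Gi i);
         S = {y::nat. \<forall>i\<in>{1..m} - {k}. [int y = xi i] (mod Gi i)};
         nk = Least (\<lambda>y. y \<in> S)
     in if S = {} then None
        else Some (\<lambda>i. if i = k then int nk else (int nk * Gk i - q i) div Gi i))"

end

theory Submission
  imports Defs
begin


lemma cong_iff_dvd_minus: "[a = b] (mod m) \<longleftrightarrow> m dvd a - b" for a b m :: int
  by (simp add: cong_def mod_eq_dvd_iff)

lemma coprime_dvd_prod_int:
  fixes g :: "nat \<Rightarrow> int"
  assumes "finite A" "\<And>i j. i \<in> A \<Longrightarrow> j \<in> A \<Longrightarrow> i \<noteq> j \<Longrightarrow> coprime (g i) (g j)"
    "\<And>i. i \<in> A \<Longrightarrow> g i dvd d"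
  shows "prod g A dvd d"
  using assms
proof (induct A rule: finite_induct)
  case (insert x A)
  have "coprime (g x) (prod g A)"
    by (rule prod_coprime_right) (use insert in auto)
  have "g x * prod g A dvd d" using insert \<open>coprime (g x) (prod g A)\<close> by (intro divides_mult) auto
  then show ?case using insert by simp
qed auto

lemma rnd_eq:
  assumes "- 1/2 \<le> e" "e < 1/2"
  shows "rnd (real_of_int a + e) = a"
  unfolding rnd_def
proof (rule the_equality)
  show "- 1/2 \<le> real_of_int a + e - real_of_int a \<and> real_of_int a + e - real_of_int a < 1/2"
    using assms by simp
next
  fix k :: int assume h: "- 1/2 \<le> real_of_int a + e - real_of_int k \<and> real_of_int a + e - real_of_int k < 1/2"
  then have "real_of_int a - real_of_int k < 1" "real_of_int k - real_of_int a < 1" using assms by linarith+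
  then have "a - k < 1" "k - a < 1" by linarith+
  then show "k = a" by linarith
qed

lemma ss_generic:
  fixes P x nn :: "nat \<Rightarrow> int"
  assumes pos: "\<forall>i\<in>{1..m}-{k}. P k div gcd (P k) (P i) \<noteq> 0 \<and> P i div gcd (P k) (P i) > 0 \<and>
        coprime (P k div gcd (P k) (P i)) (P i div gcd (P k) (P i))"
    and pw: "\<forall>i\<in>{1..m}-{k}. \<forall>j\<in>{1..m}-{k}. i \<noteq> j \<longrightarrow>
        coprime (P i div gcd (P k) (P i)) (P j div gcd (P k) (P j))"
    and qq: "\<forall>i\<in>{1..m}-{k}. rnd (real_of_int (x i - x k) / real_of_int (gcd (P k) (P i))) =
        nn k * (P k div gcd (P k) (P i)) - nn i * (P i div gcd (P k) (P i))"
    and n0: "0 \<le> nn k" and nlt: "nn k < (\<Prod>i\<in>{1..m}-{k}. P i div gcd (P k) (P i))"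
  shows "\<exists>nh. single_stage m P k x = Some nh \<and> (\<forall>i\<in>{1..m}. nh i = nn i)"
proof -
  define Gk where "Gk = (\<lambda>i. P k div gcd (P k) (P i))"
  define Gi where "Gi = (\<lambda>i. P i div gcd (P k) (P i))"
  define q where "q = (\<lambda>i. rnd (real_of_int (x i - x k) / real_of_int (gcd (P k) (P i))))"
  define Gbar where "Gbar = (\<lambda>i. SOME g::int. [Gk i * g = 1] (mod Gi i))"
  define xi where "xi = (\<lambda>i. (q i * Gbar i) mod Gi i)"
  define S where "S = {y::nat. \<forall>i\<in>{1..m} - {k}. [int y = xi i] (mod Gi i)}"
  define nk where "nk = Least (\<lambda>y. y \<in> S)"
  define I where "I = {1..m} - {k}"
  have gb: "[Gk i * Gbar i = 1] (mod Gi i)" if "i \<in> I" for i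
  proof -
    have "\<exists>g. [Gk i * g = 1] (mod Gi i)"
      using pos that cong_solve_coprime_int unfolding Gk_def Gi_def I_def by blast
    then show ?thesis unfolding Gbar_def by (rule someI_ex)
  qed
  have cn: "[nn k = xi i] (mod Gi i)" if "i \<in> I" for i
  proof -
    have "[xi i = q i * Gbar i] (mod Gi i)" unfolding xi_def by (simp add: cong_def)
    moreover have qi: "q i = nn k * Gk i - nn i * Gi i" using qq that unfolding q_def Gk_def Gi_def I_def by auto
    have "q i * Gbar i - nn k * (Gk i * Gbar i) = Gi i * (- nn i * Gbar i)"
      unfolding qi by (simp add: algebra_simps)
    then have "[q i * Gbar i = nn k * (Gk i * Gbar i)] (mod Gi i)"
      unfolding cong_iff_dvd_minus by simp
    moreover have "[nn k * (Gk i * Gbar i) = nn k * 1] (mod Gi i)"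
      using gb[OF that] by (rule cong_scalar_left)
    ultimately have "[xi i = nn k] (mod Gi i)" by (simp add: cong_trans)
    then show ?thesis by (rule cong_sym)
  qed
  have inS: "nat (nn k) \<in> S" unfolding S_def using cn n0 unfolding I_def by auto
  then have Sne: "S \<noteq> {}" by auto
  have nkS: "nk \<in> S" unfolding nk_def using inS by (rule LeastI)
  have nkle: "nk \<le> nat (nn k)" unfolding nk_def using inS by (rule Least_le)
  have "prod Gi I dvd (int nk - nn k)"
  proof (rule coprime_dvd_prod_int)
    show "finite I" unfolding I_def by simp
    show "\<And>i j. i \<in> I \<Longrightarrow> j \<in> I \<Longrightarrow> i \<noteq> j \<Longrightarrow> coprime (Gi i) (Gi j)"
      using pw unfolding Gi_def I_def by blast
    fix i assume "i \<in> I"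
    have "[int nk = xi i] (mod Gi i)" using nkS \<open>i \<in> I\<close> unfolding S_def I_def by blast
    then have "[int nk = nn k] (mod Gi i)" using cn[OF \<open>i \<in> I\<close>]
      by (meson cong_sym cong_trans)
    then show "Gi i dvd (int nk - nn k)" by (simp add: cong_iff_dvd_minus)
  qed
  then have c: "[int nk = nn k] (mod prod Gi I)" by (simp add: cong_iff_dvd_minus)
  have lt: "nn k < prod Gi I" using nlt unfolding Gi_def I_def .
  have "int nk \<le> nn k" using nkle n0 by linarith
  then have eq: "int nk = nn k"
    using cong_less_imp_eq_int[OF _ _ _ _ c] n0 lt by simp
  have res0: "single_stage m P k x = (if S = {} then None else Some (\<lambda>i. if i = k then int nk else (int nk * Gk i - q i) div Gi i))"
    unfolding single_stage_def Let_def Gk_def Gi_def q_def Gbar_def xi_def S_def nk_def by (rule refl)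
  have res: "single_stage m P k x = Some (\<lambda>i. if i = k then int nk else (int nk * Gk i - q i) div Gi i)"
    using res0 Sne by simp
  show ?thesis
  proof (rule exI, rule conjI[OF res], intro ballI)
    fix i assume i: "i \<in> {1..m}"
    show "(if i = k then int nk else (int nk * Gk i - q i) div Gi i) = nn i"
    proof (cases "i = k")
      case True then show ?thesis using eq by simp
    next
      case False
      then have "i \<in> I" using i unfolding I_def by auto
      then have "q i = nn k * Gk i - nn i * Gi i" "Gi i > 0" using qq pos unfolding q_def Gk_def Gi_def I_def by auto
      then show ?thesis using False eq by simp
    qed
  qed
qed


theorem corollary4:
  fixes M M' :: int and L1 L2 :: nat
    and G1 G2 :: "nat \<Rightarrow> int" and Gdot :: int
    and Ms :: "nat \<Rightarrow> int" and N :: int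
    and rt :: "nat \<Rightarrow> int" and tau :: "nat \<Rightarrow> real"
  assumes "M > 0" and "M' > 0" and "L1 \<ge> 2" and "L2 \<ge> 1"
    and "\<forall>i\<in>{1..L1}. G1 i > 0" and "\<forall>i\<in>{1..L2}. G2 i > 0"
    and "\<forall>i\<in>{1..L1}. \<forall>j\<in>{1..L1}. i \<noteq> j \<longrightarrow> coprime (G1 i) (G1 j)"
    and "\<forall>i\<in>{1..L2}. \<forall>j\<in>{1..L2}. i \<noteq> j \<longrightarrow> coprime (G2 i) (G2 j)"
    and "\<forall>i\<in>{1..L1}. \<forall>j\<in>{1..L2}. coprime (G1 i) (G2 j)"
    and "G1 1 = Gdot * M'"
    and "\<forall>i\<in>{1..L1}. Ms i = M * G1 i"
    and "\<forall>i\<in>{1..L2}. Ms (L1 + i) = M * M' * G2 i"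
    and "0 \<le> N" and "N < Lcm (Ms ` {1..L1 + L2})"
    and "\<forall>i\<in>{1..L1 + L2}. 0 \<le> rt i \<and> rt i \<le> Ms i - 1"
    and "\<forall>i\<in>{1..L1 + L2}. \<bar>real_of_int (rt i - N mod Ms i)\<bar> \<le> tau i"
    and "tau 1 < real_of_int M / 4"
    and "\<forall>i\<in>{2..L1}. tau i \<le> real_of_int M / 4"
    and "\<forall>i\<in>{L1 + 1..L1 + L2}. tau i \<le> real_of_int (M * M') / 2 - real_of_int M / 4"
  shows "\<exists>nh. single_stage (L1 + L2) Ms 1 rt = Some nh \<and>
           (\<forall>i\<in>{1..L1 + L2}. nh i = (N - N mod Ms i) div Ms i)"
proof -
  define m where "m = L1 + L2"
  define gv where "gv i = (if i \<le> L1 then G1 i else G2 (i - L1))" for i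
  define gk where "gk i = (if i \<le> L1 then G1 1 else Gdot)" for i
  define mv where "mv i = (if i \<le> L1 then M else M * M')" for i
  have M: "M > 0" "M' > 0" using assms(1,2) .
  have L1: "L1 \<ge> 2" using assms(3) .
  have G11: "G1 1 > 0" using assms(5) L1 by auto
  have Gd: "Gdot > 0" using G11 assms(10) M(2) by (simp add: zero_less_mult_iff)
  have Ms1: "Ms 1 = M * G1 1" using assms(11) L1 by auto
  have key: "gcd (Ms 1) (Ms i) = mv i \<and> Ms 1 = mv i * gk i \<and> Ms i = mv i * gv i \<and> mv i > 0 \<and>
      gv i > 0 \<and> gk i > 0 \<and> coprime (gk i) (gv i) \<and> tau i + tau 1 < real_of_int (mv i) / 2"
    if i: "i \<in> {2..m}" for i
  proof (cases "i \<le> L1")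
    case True
    have Msi: "Ms i = M * G1 i" using assms(11) True i by auto
    have cp: "coprime (G1 1) (G1 i)" using assms(7) True i by auto
    have "gcd (Ms 1) (Ms i) = \<bar>M\<bar> * gcd (G1 1) (G1 i)" unfolding Ms1 Msi
      by (rule gcd_mult_distrib_int[symmetric])
    also have "\<dots> = M" using cp M by simp
    finally have g: "gcd (Ms 1) (Ms i) = M" .
    have "tau i \<le> real_of_int M / 4" using assms(18) True i by auto
    then have t: "tau i + tau 1 < real_of_int M / 2" using assms(17) by linarith
    show ?thesis using True g Msi Ms1 cp t M G11 assms(5) i
      unfolding gv_def gk_def mv_def by auto
  next
    case False
    define j where "j = i - L1"
    have j: "j \<in> {1..L2}" "i = L1 + j" using False i unfolding j_def m_def by auto
    have Msi: "Ms i = M * M' * G2 j" using assms(12) j by auto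
    have cp0: "coprime (Gdot * M') (G2 j)" using assms(9) assms(10) L1 j by force
    then have cp: "coprime Gdot (G2 j)" by simp
    have Ms1': "Ms 1 = (M * M') * Gdot" using Ms1 assms(10) by simp
    have "gcd (Ms 1) (Ms i) = \<bar>M * M'\<bar> * gcd Gdot (G2 j)" unfolding Ms1' Msi
      by (rule gcd_mult_distrib_int[symmetric])
    also have "\<dots> = M * M'" using cp M by simp
    finally have g: "gcd (Ms 1) (Ms i) = M * M'" .
    have "tau i \<le> real_of_int (M * M') / 2 - real_of_int M / 4" using assms(19) j by auto
    then have t: "tau i + tau 1 < real_of_int (M * M') / 2" using assms(17) by linarith
    have "G2 j > 0" using assms(6) j by auto
    then show ?thesis using False g Msi Ms1' cp t M Gd j
      unfolding gv_def gk_def mv_def j_def by auto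
  qed
  have set: "{1..m} - {1} = {2..m}" by auto
  have Mspos: "Ms i > 0" if "i \<in> {1..m}" for i
  proof (cases "i = 1")
    case True then show ?thesis using Ms1 M G11 by simp
  next
    case False then have "i \<in> {2..m}" using that by auto
    then show ?thesis using key by (simp add: zero_less_mult_iff)
  qed
  define nn where "nn i = N div Ms i" for i
  have gdiv: "Ms 1 div gcd (Ms 1) (Ms i) = gk i" "Ms i div gcd (Ms 1) (Ms i) = gv i" if "i \<in> {2..m}" for i
    using key[OF that] by auto
  have prodpos: "prod gv {2..m} > 0" using key by (intro prod_pos) auto
  have "Lcm (Ms ` {1..m}) dvd Ms 1 * prod gv {2..m}"
  proof (unfold Lcm_dvd_iff, intro ballI)
    fix y assume "y \<in> Ms ` {1..m}"
    then obtain i where i: "i \<in> {1..m}" "y = Ms i" by auto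
    show "y dvd Ms 1 * prod gv {2..m}"
    proof (cases "i = 1")
      case True then show ?thesis using i by simp
    next
      case False then have i2: "i \<in> {2..m}" using i by auto
      have "gv i dvd prod gv {2..m}" using i2 by (intro dvd_prodI) auto
      then have "mv i * gv i dvd (mv i * gk i) * prod gv {2..m}"
        by (metis dvd_mult mult.assoc mult.commute mult_dvd_mono dvd_refl)
      then show ?thesis using key[OF i2] i by simp
    qed
  qed
  moreover have Ms1p: "Ms 1 > 0" using Mspos[of 1] L1 unfolding m_def by simp
  ultimately have "Lcm (Ms ` {1..m}) \<le> Ms 1 * prod gv {2..m}"
    using prodpos by (intro zdvd_imp_le) simp_all
  then have Nlt: "N < Ms 1 * prod gv {2..m}" using assms(14) unfolding m_def by simp
  have n0: "0 \<le> nn 1" unfolding nn_def using assms(13) Ms1p by (simp add: pos_imp_zdiv_nonneg_iff)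
  have nlt: "nn 1 < prod gv {2..m}"
  proof -
    have "N mod Ms 1 \<ge> 0" using Ms1p by simp
    moreover have "N = nn 1 * Ms 1 + N mod Ms 1" unfolding nn_def by simp
    ultimately have "nn 1 * Ms 1 \<le> N" by linarith
    then have "nn 1 * Ms 1 < prod gv {2..m} * Ms 1" using Nlt by (simp add: mult.commute)
    then show ?thesis using Mspos[of 1] L1 unfolding m_def by simp
  qed
  have qq: "rnd (real_of_int (rt i - rt 1) / real_of_int (gcd (Ms 1) (Ms i))) =
        nn 1 * (Ms 1 div gcd (Ms 1) (Ms i)) - nn i * (Ms i div gcd (Ms 1) (Ms i))" if i: "i \<in> {2..m}" for i
  proof -
    note k = key[OF i]
    define e where "e = (rt i - N mod Ms i) - (rt 1 - N mod Ms 1)"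
    have d1: "N mod Ms 1 = N - nn 1 * Ms 1" unfolding nn_def by (simp add: minus_div_mult_eq_mod)
    have d2: "N mod Ms i = N - nn i * Ms i" unfolding nn_def by (simp add: minus_div_mult_eq_mod)
    have ie: "rt i - rt 1 = mv i * (nn 1 * gk i - nn i * gv i) + e"
      unfolding e_def d1 d2 using k by (simp add: algebra_simps)
    have b1: "\<bar>real_of_int (rt i - N mod Ms i)\<bar> \<le> tau i" using assms(16) i unfolding m_def by auto
    have b2: "\<bar>real_of_int (rt 1 - N mod Ms 1)\<bar> \<le> tau 1" using assms(16) L1 unfolding m_def by auto
    have "\<bar>real_of_int e\<bar> \<le> \<bar>real_of_int (rt i - N mod Ms i)\<bar> + \<bar>real_of_int (rt 1 - N mod Ms 1)\<bar>"
      unfolding e_def of_int_diff[of "rt i - N mod Ms i"] by (rule abs_triangle_ineq4)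
    moreover have "tau i + tau 1 < real_of_int (mv i) / 2" using k by blast
    ultimately have eb: "\<bar>real_of_int e\<bar> < real_of_int (mv i) / 2" using b1 b2 by linarith
    have mvp: "real_of_int (mv i) > 0" using k by simp
    have "real_of_int (rt i - rt 1) / real_of_int (mv i) =
          real_of_int (nn 1 * gk i - nn i * gv i) + real_of_int e / real_of_int (mv i)"
      unfolding ie using mvp by (simp add: field_simps)
    moreover have "- 1/2 \<le> real_of_int e / real_of_int (mv i)" "real_of_int e / real_of_int (mv i) < 1/2"
      using eb mvp by (auto simp: field_simps abs_less_iff)
    ultimately have "rnd (real_of_int (rt i - rt 1) / real_of_int (mv i)) = nn 1 * gk i - nn i * gv i"
      using rnd_eq[of "real_of_int e / real_of_int (mv i)" "nn 1 * gk i - nn i * gv i"] by metis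
    moreover have g: "gcd (Ms 1) (Ms i) = mv i" using k by blast
    ultimately have A: "rnd (real_of_int (rt i - rt 1) / real_of_int (gcd (Ms 1) (Ms i))) = nn 1 * gk i - nn i * gv i"
      by simp
    show ?thesis unfolding gdiv[OF i] by (rule A)
  qed
  have "\<exists>nh. single_stage m Ms 1 rt = Some nh \<and> (\<forall>i\<in>{1..m}. nh i = nn i)"
  proof (rule ss_generic)
    show "\<forall>i\<in>{1..m}-{1}. Ms 1 div gcd (Ms 1) (Ms i) \<noteq> 0 \<and> Ms i div gcd (Ms 1) (Ms i) > 0 \<and>
        coprime (Ms 1 div gcd (Ms 1) (Ms i)) (Ms i div gcd (Ms 1) (Ms i))"
    proof (unfold set, intro ballI)
      fix i assume i: "i \<in> {2..m}"
      show "Ms 1 div gcd (Ms 1) (Ms i) \<noteq> 0 \<and> Ms i div gcd (Ms 1) (Ms i) > 0 \<and>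
        coprime (Ms 1 div gcd (Ms 1) (Ms i)) (Ms i div gcd (Ms 1) (Ms i))"
        unfolding gdiv[OF i] using key[OF i] by simp
    qed
    show "\<forall>i\<in>{1..m}-{1}. \<forall>j\<in>{1..m}-{1}. i \<noteq> j \<longrightarrow>
        coprime (Ms i div gcd (Ms 1) (Ms i)) (Ms j div gcd (Ms 1) (Ms j))"
    proof (unfold set, intro ballI impI)
      fix i j assume ij: "i \<in> {2..m}" "j \<in> {2..m}" "i \<noteq> j"
      have "coprime (gv i) (gv j)"
      proof (cases "i \<le> L1"; cases "j \<le> L1")
        assume "i \<le> L1" "j \<le> L1" then show ?thesis using assms(7) ij unfolding gv_def by auto
      next
        assume a: "i \<le> L1" "\<not> j \<le> L1"
        then have "j - L1 \<in> {1..L2}" using ij unfolding m_def by auto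
        then show ?thesis using assms(9) a ij unfolding gv_def by auto
      next
        assume a: "\<not> i \<le> L1" "j \<le> L1"
        then have "i - L1 \<in> {1..L2}" using ij unfolding m_def by auto
        then show ?thesis using assms(9) a ij unfolding gv_def by (auto simp: coprime_commute)
      next
        assume a: "\<not> i \<le> L1" "\<not> j \<le> L1"
        then have "i - L1 \<in> {1..L2}" "j - L1 \<in> {1..L2}" "i - L1 \<noteq> j - L1" using ij unfolding m_def by auto
        then show ?thesis using assms(8) a unfolding gv_def by auto
      qed
      then show "coprime (Ms i div gcd (Ms 1) (Ms i)) (Ms j div gcd (Ms 1) (Ms j))"
        using gdiv ij by simp
    qed
    show "\<forall>i\<in>{1..m}-{1}. rnd (real_of_int (rt i - rt 1) / real_of_int (gcd (Ms 1) (Ms i))) =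
        nn 1 * (Ms 1 div gcd (Ms 1) (Ms i)) - nn i * (Ms i div gcd (Ms 1) (Ms i))"
      unfolding set using qq by blast
    show "0 \<le> nn 1" by (rule n0)
    show "nn 1 < (\<Prod>i\<in>{1..m}-{1}. Ms i div gcd (Ms 1) (Ms i))"
    proof -
      have "(\<Prod>i\<in>{2..m}. Ms i div gcd (Ms 1) (Ms i)) = prod gv {2..m}"
        by (rule prod.cong[OF refl]) (rule gdiv(2))
      then show ?thesis unfolding set using nlt by simp
    qed
  qed
  then obtain nh where nh: "single_stage m Ms 1 rt = Some nh" "\<forall>i\<in>{1..m}. nh i = nn i" by blast
  show ?thesis
  proof (rule exI[of _ nh], intro conjI ballI)
    show "single_stage (L1 + L2) Ms 1 rt = Some nh" using nh m_def by simp
    fix i assume i: "i \<in> {1..L1 + L2}"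
    then have "Ms i > 0" using Mspos m_def by simp
    then have "(N - N mod Ms i) div Ms i = N div Ms i" by (simp add: minus_mod_eq_mult_div)
    then show "nh i = (N - N mod Ms i) div Ms i" using nh i m_def nn_def by simp
  qed
qed

end
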